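(* Let $\lambda\ge0$, $d\ge0$ be constants and let $q$ be a probability measure on $(0,\infty)$ of the form $q=q_a+\sum_{r^j\in\mathcal D}p^j\delta_{r^j}$, with $q_a$ absolutely continuous w.r.t. Lebesgue measure, $\mathcal D\subset(0,\infty)$ finite, $p^j>0$, and $\int r\,q(dr)<\infty$. Let $r\mapsto\rho^r\ge0$ on $[0,\infty)$ have finite mass $N=\int_0^\infty\rho^r\,dr<\infty$ and satisfy the stationary equation $$\rho^r-\rho^s+\lambda q((s,r])=d\,N^{(s,r]}\quad\text{for all }0\le s<r,\qquad N^{(s,r]}:=\int_{(s,r]}\rho^\alpha\,d\alpha .$$ Then $\rho^r=\lambda\int_{(r,\infty)}e^{-d(\alpha-r)}q(d\alpha)$ for a.e. $r\ge0$.
   Context: $\delta_x$ denotes the Dirac measure at $x$. *)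

theory Defs
  imports "HOL-Probability.Probability"
begin

end

theory Submission
  imports Defs
begin


lemma pointwise_inner:
  fixes d s r a :: real
  assumes d: "d \<ge> 0" and sr: "s < r"
  shows "(\<integral>\<^sup>+t. ennreal (indicator {s<..r} t * d * (indicator {t<..} a * exp (-d*(a-t)))) \<partial>lborel)
         + ennreal (indicator {s<..} a * exp (-d*(a-s)))
       = ennreal (indicator {r<..} a * exp (-d*(a-r))) + ennreal (indicator {s<..r} a)"
proof (cases "a \<le> s")
  case True
  have "(\<integral>\<^sup>+t. ennreal (indicator {s<..r} t * d * (indicator {t<..} a * exp (-d*(a-t)))) \<partial>lborel) = 0"
    using True by (intro nn_integral_zero') (auto simp: indicator_def)
  then show ?thesis using True sr by (simp add: indicator_def)
next
  case False
  define m where "m = min r a"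
  have sm: "s \<le> m" using False sr by (simp add: m_def)
  have "(\<integral>\<^sup>+t. ennreal (indicator {s<..r} t * d * (indicator {t<..} a * exp (-d*(a-t)))) \<partial>lborel)
      = (\<integral>\<^sup>+t. ennreal (d * exp (-d*(a-t))) * indicator {s..m} t \<partial>lborel)"
  proof (rule nn_integral_cong_AE)
    have "AE t in lborel. t \<noteq> s" by (rule AE_lborel_singleton)
    moreover have "AE t in lborel. t \<noteq> m" by (rule AE_lborel_singleton)
    ultimately show "AE t in lborel. ennreal (indicator {s<..r} t * d * (indicator {t<..} a * exp (-d*(a-t))))
      = ennreal (d * exp (-d*(a-t))) * indicator {s..m} t"
      by eventually_elim (auto simp: indicator_def m_def)
  qed
  also have "\<dots> = ennreal (exp (-d*(a-m)) - exp (-d*(a-s)))"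
    by (rule nn_integral_FTC_Icc[where F="\<lambda>t. exp (-d*(a-t))"])
       (auto intro!: derivative_eq_intros simp: d sm)
  finally have eq: "(\<integral>\<^sup>+t. ennreal (indicator {s<..r} t * d * (indicator {t<..} a * exp (-d*(a-t)))) \<partial>lborel)
      = ennreal (exp (-d*(a-m)) - exp (-d*(a-s)))" .
  have le: "exp (-d*(a-s)) \<le> exp (-d*(a-m))" using sm d by (simp add: mult_left_mono)
  have "ennreal (exp (-d*(a-m)) - exp (-d*(a-s))) + ennreal (exp (-d*(a-s))) = ennreal (exp (-d*(a-m)))"
    using le by (subst ennreal_plus[symmetric]) auto
  then show ?thesis using False eq sr by (auto simp: indicator_def m_def min_def)
qed



lemma G_identity:
  fixes q :: "real measure" and d s r :: real
  assumes q: "prob_space q" and qs: "sets q = sets borel" and d: "d \<ge> 0" and sr: "s < r"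
  shows "(\<integral>\<^sup>+t. ennreal (indicator {s<..r} t * d) * (\<integral>\<^sup>+a. ennreal (indicator {t<..} a * exp (-d*(a-t))) \<partial>q) \<partial>lborel)
       + (\<integral>\<^sup>+a. ennreal (indicator {s<..} a * exp (-d*(a-s))) \<partial>q)
     = (\<integral>\<^sup>+a. ennreal (indicator {r<..} a * exp (-d*(a-r))) \<partial>q) + emeasure q {s<..r}"
proof -
  interpret q: prob_space q by fact
  interpret P: pair_sigma_finite q lborel
    by (intro pair_sigma_finite.intro q.sigma_finite_measure_axioms lborel.sigma_finite_measure_axioms)
  have mq: "borel_measurable q = borel_measurable borel" by (rule measurable_cong_sets[OF qs refl])
  have mp: "borel_measurable (q \<Otimes>\<^sub>M lborel) = borel_measurable (borel \<Otimes>\<^sub>M borel)"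
    by (rule measurable_cong_sets[OF sets_pair_measure_cong[OF qs sets_lborel] refl])
  have f: "fst \<in> borel_measurable (borel::(real\<times>real) measure)" 
    by (intro borel_measurable_continuous_onI continuous_intros)
  have s: "snd \<in> borel_measurable (borel::(real\<times>real) measure)" 
    by (intro borel_measurable_continuous_onI continuous_intros)
  have p: "Measurable.pred (borel \<Otimes>\<^sub>M borel) (\<lambda>x::real\<times>real. fst x \<in> {snd x<..})"
    unfolding borel_prod using f s by simp
  have Jb: "(\<lambda>(a, t). ennreal (indicator {s<..r} t * d * (indicator {t<..} a * exp (- d * (a - t))))) \<in> borel_measurable (borel \<Otimes>\<^sub>M borel)"
    using p by measurable
  have mp2: "borel_measurable (borel \<Otimes>\<^sub>M lborel) = borel_measurable (borel \<Otimes>\<^sub>M (borel::real measure))"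
    by (rule measurable_cong_sets[OF sets_pair_measure_cong[OF refl sets_lborel] refl])
  have "(\<integral>\<^sup>+t. ennreal (indicator {s<..r} t * d) * (\<integral>\<^sup>+a. ennreal (indicator {t<..} a * exp (-d*(a-t))) \<partial>q) \<partial>lborel)
      = (\<integral>\<^sup>+t. (\<integral>\<^sup>+a. ennreal (indicator {s<..r} t * d * (indicator {t<..} a * exp (-d*(a-t)))) \<partial>q) \<partial>lborel)"
  proof (rule nn_integral_cong)
    fix t :: real
    have "(\<lambda>a. ennreal (indicator {t<..} a * exp (-d*(a-t)))) \<in> borel_measurable q"
      unfolding mq by measurable
    then show "ennreal (indicator {s<..r} t * d) * (\<integral>\<^sup>+a. ennreal (indicator {t<..} a * exp (-d*(a-t))) \<partial>q)
      = (\<integral>\<^sup>+a. ennreal (indicator {s<..r} t * d * (indicator {t<..} a * exp (-d*(a-t)))) \<partial>q)"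
      using d by (subst nn_integral_cmult[symmetric]) (auto simp: ennreal_mult'' ennreal_mult indicator_def)
  qed
  also have "\<dots> = (\<integral>\<^sup>+a. (\<integral>\<^sup>+t. ennreal (indicator {s<..r} t * d * (indicator {t<..} a * exp (-d*(a-t)))) \<partial>lborel) \<partial>q)"
  proof (rule P.Fubini')
    show "(\<lambda>(a, t). ennreal (indicator {s<..r} t * d * (indicator {t<..} a * exp (- d * (a - t))))) \<in> borel_measurable (q \<Otimes>\<^sub>M lborel)"
      unfolding mp by (rule Jb)
  qed
  finally have e1: "(\<integral>\<^sup>+t. ennreal (indicator {s<..r} t * d) * (\<integral>\<^sup>+a. ennreal (indicator {t<..} a * exp (-d*(a-t))) \<partial>q) \<partial>lborel)
     = (\<integral>\<^sup>+a. (\<integral>\<^sup>+t. ennreal (indicator {s<..r} t * d * (indicator {t<..} a * exp (-d*(a-t)))) \<partial>lborel) \<partial>q)" .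
  have m1: "(\<lambda>a. (\<integral>\<^sup>+t. ennreal (indicator {s<..r} t * d * (indicator {t<..} a * exp (-d*(a-t)))) \<partial>lborel)) \<in> borel_measurable q"
    unfolding mq by (rule lborel.borel_measurable_nn_integral) (use Jb mp2 in simp)
  have m2: "(\<lambda>a. ennreal (indicator {s<..} a * exp (-d*(a-s)))) \<in> borel_measurable q"
    unfolding mq by measurable
  have m3: "(\<lambda>a. ennreal (indicator {r<..} a * exp (-d*(a-r)))) \<in> borel_measurable q"
    unfolding mq by measurable
  have m4: "(\<lambda>a. ennreal (indicator {s<..r} a)) \<in> borel_measurable q"
    unfolding mq by measurable
  have "(\<integral>\<^sup>+a. (\<integral>\<^sup>+t. ennreal (indicator {s<..r} t * d * (indicator {t<..} a * exp (-d*(a-t)))) \<partial>lborel) \<partial>q)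
       + (\<integral>\<^sup>+a. ennreal (indicator {s<..} a * exp (-d*(a-s))) \<partial>q)
     = (\<integral>\<^sup>+a. (\<integral>\<^sup>+t. ennreal (indicator {s<..r} t * d * (indicator {t<..} a * exp (-d*(a-t)))) \<partial>lborel)
       + ennreal (indicator {s<..} a * exp (-d*(a-s))) \<partial>q)"
    by (rule nn_integral_add[symmetric]) (use m1 m2 in auto)
  also have "\<dots> = (\<integral>\<^sup>+a. ennreal (indicator {r<..} a * exp (-d*(a-r))) + ennreal (indicator {s<..r} a) \<partial>q)"
    by (rule nn_integral_cong) (rule pointwise_inner[OF d sr])
  also have "\<dots> = (\<integral>\<^sup>+a. ennreal (indicator {r<..} a * exp (-d*(a-r))) \<partial>q) + (\<integral>\<^sup>+a. ennreal (indicator {s<..r} a) \<partial>q)"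
    by (rule nn_integral_add) (use m3 m4 in auto)
  also have "(\<integral>\<^sup>+a. ennreal (indicator {s<..r} a) \<partial>q) = emeasure q {s<..r}"
    using qs by (simp add: ennreal_indicator del: indicator_simps)
  finally show ?thesis using e1 by simp
qed



lemma g_props:
  fixes q :: "real measure" and d :: real
  assumes q: "prob_space q" and qs: "sets q = sets borel" and d: "d \<ge> 0"
  defines "gr \<equiv> \<lambda>t. LINT a:{t<..}|q. exp (-d*(a-t))"
  shows "\<And>t. 0 \<le> gr t" "\<And>t. gr t \<le> measure q {t<..}"
    and "\<And>t. ennreal (gr t) = (\<integral>\<^sup>+a. ennreal (indicator {t<..} a * exp (-d*(a-t))) \<partial>q)"
    and "gr \<in> borel_measurable borel"
    and "\<And>s r. s < r \<Longrightarrow> d * (LINT t:{s<..r}|lborel. gr t) + gr s = gr r + measure q {s<..r}"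
proof -
  interpret q: prob_space q by fact
  have mq: "borel_measurable q = borel_measurable borel" by (rule measurable_cong_sets[OF qs refl])
  have mt: "(\<lambda>a. indicator {t<..} a * exp (-d*(a-t))) \<in> borel_measurable q" for t
    unfolding mq by measurable
  have int: "integrable q (\<lambda>a. indicator {t<..} a * exp (-d*(a-t)))" for t
  proof (rule q.integrable_const_bound[where B=1])
    show "AE x in q. norm (indicator {t<..} x * exp (- d * (x - t))) \<le> 1"
      using d by (intro AE_I2) (auto simp: indicator_def mult_nonneg_nonneg)
  qed (rule mt)
  have grd: "gr t = integral\<^sup>L q (\<lambda>a. indicator {t<..} a * exp (-d*(a-t)))" for t
    by (simp add: gr_def set_lebesgue_integral_def)
  show nn: "0 \<le> gr t" for t
    unfolding grd by (intro integral_nonneg_AE AE_I2) auto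
  show "gr t \<le> measure q {t<..}" for t
  proof -
    have "gr t \<le> integral\<^sup>L q (indicator {t<..})"
      unfolding grd
      using d by (intro integral_mono int) (auto simp: indicator_def mult_nonneg_nonneg qs q.emeasure_eq_measure intro!: integrable_real_indicator)
    also have "\<dots> = measure q {t<..}" using qs by simp
    finally show ?thesis .
  qed
  show nnI: "ennreal (gr t) = (\<integral>\<^sup>+a. ennreal (indicator {t<..} a * exp (-d*(a-t))) \<partial>q)" for t
    unfolding grd by (rule nn_integral_eq_integral[symmetric, OF int]) auto
  have f: "fst \<in> borel_measurable (borel::(real\<times>real) measure)" 
    by (intro borel_measurable_continuous_onI continuous_intros)
  have s: "snd \<in> borel_measurable (borel::(real\<times>real) measure)" 
    by (intro borel_measurable_continuous_onI continuous_intros)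
  have p: "Measurable.pred (borel \<Otimes>\<^sub>M borel) (\<lambda>x::real\<times>real. snd x \<in> {fst x<..})"
    unfolding borel_prod using f s by simp
  have Jb: "(\<lambda>(t, a). ennreal (indicator {t<..} a * exp (- d * (a - t)))) \<in> borel_measurable (borel \<Otimes>\<^sub>M borel)"
    using p by measurable
  have mp2: "borel_measurable (borel \<Otimes>\<^sub>M q) = borel_measurable (borel \<Otimes>\<^sub>M (borel::real measure))"
    by (rule measurable_cong_sets[OF sets_pair_measure_cong[OF refl qs] refl])
  have "(\<lambda>t. \<integral>\<^sup>+a. ennreal (indicator {t<..} a * exp (-d*(a-t))) \<partial>q) \<in> borel_measurable borel"
    by (rule q.borel_measurable_nn_integral) (unfold mp2, rule Jb)
  then have "(\<lambda>t. enn2real (\<integral>\<^sup>+a. ennreal (indicator {t<..} a * exp (-d*(a-t))) \<partial>q)) \<in> borel_measurable borel"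
    by measurable
  moreover have "(\<lambda>t. enn2real (\<integral>\<^sup>+a. ennreal (indicator {t<..} a * exp (-d*(a-t))) \<partial>q)) = gr"
    by (rule ext, subst nnI[symmetric]) (simp add: nn)
  ultimately show mg: "gr \<in> borel_measurable borel" by simp
  fix s r :: real assume sr: "s < r"
  note Gi = G_identity[OF q qs d sr, unfolded nnI[symmetric]]
  have intI: "integrable lborel (\<lambda>t. indicator {s<..r} t * (d * gr t))"
  proof (rule integrableI_bounded_set[where A="{s<..r}" and B=d])
    show "(\<lambda>t. indicator {s<..r} t * (d * gr t)) \<in> borel_measurable lborel"
      using mg by measurable
    show "AE x in lborel. x \<in> {s<..r} \<longrightarrow> norm (indicator {s<..r} x * (d * gr x)) \<le> d"
    proof (intro AE_I2 impI)
      fix x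
      have "gr x \<le> 1" using \<open>\<And>t. gr t \<le> measure q {t<..}\<close>[of x] q.prob_le_1[of "{x<..}"] by linarith
      then show "norm (indicator {s<..r} x * (d * gr x)) \<le> d"
        using nn[of x] d by (auto simp: indicator_def mult_left_le)
    qed
  qed (use sr in \<open>auto simp: indicator_def\<close>)
  have "(\<integral>\<^sup>+t. ennreal (indicator {s<..r} t * d) * ennreal (gr t) \<partial>lborel)
      = (\<integral>\<^sup>+t. ennreal (indicator {s<..r} t * (d * gr t)) \<partial>lborel)"
    by (intro nn_integral_cong) (simp add: ennreal_mult'[symmetric] nn d)
  also have "\<dots> = ennreal (d * (LINT t:{s<..r}|lborel. gr t))"
  proof -
    have "integral\<^sup>L lborel (\<lambda>t. indicator {s<..r} t * (d * gr t)) = d * (LINT t:{s<..r}|lborel. gr t)"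
      by (simp add: set_lebesgue_integral_def mult.left_commute)
    moreover have "AE t in lborel. 0 \<le> indicator {s<..r} t * (d * gr t)"
      using nn d by (intro AE_I2) auto
    ultimately show ?thesis by (simp add: nn_integral_eq_integral[OF intI])
  qed
  finally have "ennreal (d * (LINT t:{s<..r}|lborel. gr t)) + ennreal (gr s) = ennreal (gr r) + ennreal (measure q {s<..r})"
    using Gi by (simp add: q.emeasure_eq_measure)
  moreover have "0 \<le> d * (LINT t:{s<..r}|lborel. gr t)"
    using d nn unfolding set_lebesgue_integral_def by (intro mult_nonneg_nonneg integral_nonneg_AE AE_I2) auto
  ultimately show "d * (LINT t:{s<..r}|lborel. gr t) + gr s = gr r + measure q {s<..r}"
    using nn[of s] nn[of r] by (simp add: ennreal_plus[symmetric] del: ennreal_plus)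
qed



lemma ode_unique:
  fixes H :: "real \<Rightarrow> real" and d b :: real
  assumes int: "set_integrable lborel {0..b} H"
    and eq: "\<And>r. 0 < r \<Longrightarrow> r \<le> b \<Longrightarrow> H r = H 0 + d * (LINT t:{0<..r}|lborel. H t)"
    and b: "0 \<le> b"
  shows "H b = H 0 * exp (d*b)"
proof -
  have Hint: "H integrable_on {0..b}" by (rule set_borel_integral_eq_integral(1)[OF int])
  have eq2: "H r = H 0 + d * integral {0..r} H" if r: "r \<in> {0..b}" for r
  proof (cases "r = 0")
    case True then show ?thesis by simp
  next
    case False
    with r have r0: "0 < r" "r \<le> b" by auto
    have i1: "set_integrable lborel {0..r} H"
      by (rule set_integrable_subset[OF int]) (use r0 in auto)
    have i2: "set_integrable lborel {0<..r} H"
      by (rule set_integrable_subset[OF int]) (use r0 in auto)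
    have "(LINT t:{0<..r}|lborel. H t) = (LINT t:{0..r}|lborel. H t)"
    proof (rule set_integral_cong_set)
      show "set_borel_measurable lborel {0..r} H" using i1
        unfolding set_integrable_def set_borel_measurable_def by auto
      show "set_borel_measurable lborel {0<..r} H" using i2
        unfolding set_integrable_def set_borel_measurable_def by auto
      show "AE x in lborel. (x \<in> {0..r}) = (x \<in> {0<..r})"
        using AE_lborel_singleton[of 0] by eventually_elim auto
    qed
    also have "\<dots> = integral {0..r} H" by (rule set_borel_integral_eq_integral(2)[OF i1])
    finally show ?thesis using eq[OF r0] by simp
  qed
  have deriv: "(H has_field_derivative d * H x) (at x within {0..b})" if x: "x \<in> {0..b}" for x
  proof -
    have "((\<lambda>u. integral {0..u} H) has_vector_derivative H x) (at x within {0..b})"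
    proof (rule integral_has_vector_derivative[OF _ x])
      have "continuous_on {0..b} (\<lambda>u. H 0 + d * integral {0..u} H)"
        by (intro continuous_intros indefinite_integral_continuous_1[OF Hint])
      then show "continuous_on {0..b} H"
        by (rule continuous_on_eq) (rule eq2[symmetric])
    qed
    then have "((\<lambda>u. H 0 + d * integral {0..u} H) has_field_derivative d * H x) (at x within {0..b})"
      by (auto intro!: derivative_eq_intros simp: has_real_derivative_iff_has_vector_derivative)
    then show ?thesis
    proof (rule has_field_derivative_transform_within[where d=1])
      fix y :: real assume "y \<in> {0..b}"
      then show "H 0 + d * integral {0..y} H = H y" by (rule eq2[symmetric])
    qed (use x in auto)
  qed
  have "\<exists>c. \<forall>x\<in>{0..b}. exp (-d*x) * H x = c"
  proof (rule has_field_derivative_zero_constant)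
    fix x assume x: "x \<in> {0..b}"
    have e: "((\<lambda>x. exp (-d*x)) has_field_derivative exp (-d*x) * (-d)) (at x within {0..b})"
      by (auto intro!: derivative_eq_intros)
    have "((\<lambda>x. exp (-d*x) * H x) has_field_derivative (exp (-d*x) * (-d) * H x + d * H x * exp (-d*x))) (at x within {0..b})"
      by (rule DERIV_mult[OF e deriv[OF x]])
    then show "((\<lambda>x. exp (-d*x) * H x) has_field_derivative 0) (at x within {0..b})"
      by (simp add: algebra_simps)
  qed auto
  then obtain c where c: "\<And>x. x \<in> {0..b} \<Longrightarrow> exp (-d*x) * H x = c" by blast
  have "exp (-d*b) * H b = H 0" using c[of b] c[of 0] b by simp
  then have "exp (d*b) * (exp (-d*b) * H b) = H 0 * exp (d*b)" by simp
  then show ?thesis by (simp add: exp_minus_inverse mult.assoc[symmetric])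
qed

theorem proposition2p3:
  fixes lam d :: real
    and q qa :: "real measure"
    and D :: "real set" and p :: "real \<Rightarrow> real"
    and \<rho> :: "real \<Rightarrow> real"
  assumes lam: "lam \<ge> 0" and d: "d \<ge> 0"
    and q_prob: "prob_space q" and q_sets: "sets q = sets borel"
    and q_supp: "emeasure q {..0} = 0"
    and qa_sets: "sets qa = sets borel"
    and qa_ac: "absolutely_continuous lborel qa"
    and D_fin: "finite D" and D_pos: "D \<subseteq> {0<..}"
    and p_pos: "\<And>x. x \<in> D \<Longrightarrow> p x > 0"
    and q_decomp: "\<And>A. A \<in> sets borel \<Longrightarrow>
        emeasure q A = emeasure qa A + (\<Sum>x\<in>D. ennreal (p x) * emeasure (return borel x) A)"
    and q_mean: "integrable q (\<lambda>r. r)"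
    and \<rho>_nonneg: "\<And>r. r \<ge> 0 \<Longrightarrow> \<rho> r \<ge> 0"
    and \<rho>_int: "set_integrable lborel {0..} \<rho>"
    and stat: "\<And>s r. 0 \<le> s \<Longrightarrow> s < r \<Longrightarrow>
        \<rho> r - \<rho> s + lam * measure q {s<..r} = d * (LINT \<alpha>:{s<..r}|lborel. \<rho> \<alpha>)"
  shows "AE r in lborel. r \<ge> 0 \<longrightarrow>
           \<rho> r = lam * (LINT \<alpha>:{r<..}|q. exp (- d * (\<alpha> - r)))"
proof -
  interpret q: prob_space q by (rule q_prob)
  define gr where "gr \<equiv> \<lambda>t. LINT a:{t<..}|q. exp (-d*(a-t))"
  note gp = g_props[OF q_prob q_sets d]
  have gr_nn: "\<And>t. 0 \<le> gr t" unfolding gr_def by (rule gp(1))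
  have gr_le: "\<And>t. gr t \<le> measure q {t<..}" unfolding gr_def by (rule gp(2))
  have gr_meas: "gr \<in> borel_measurable borel" unfolding gr_def by (rule gp(4))
  have gr_eq: "\<And>s r. s < r \<Longrightarrow> d * (LINT t:{s<..r}|lborel. gr t) + gr s = gr r + measure q {s<..r}"
    unfolding gr_def by (rule gp(5))
  have gr_le1: "gr t \<le> 1" for t using gr_le[of t] q.prob_le_1[of "{t<..}"] by linarith
  have gr_int: "set_integrable lborel A gr" if A: "A \<in> sets borel" "emeasure lborel A < \<infinity>" for A
    unfolding set_integrable_def
  proof (rule integrableI_bounded_set[where A=A and B=1])
    show "(\<lambda>x. indicator A x *\<^sub>R gr x) \<in> borel_measurable lborel" using gr_meas A by measurable
    show "AE x in lborel. x \<in> A \<longrightarrow> norm (indicator A x *\<^sub>R gr x) \<le> 1"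
      using gr_nn gr_le1 by (intro AE_I2) (auto simp: indicator_def)
  qed (use A in \<open>auto simp: indicator_def\<close>)
  define H where "H \<equiv> \<lambda>t. \<rho> t - lam * gr t"
  have H_int: "set_integrable lborel {0..b} H" for b
  proof -
    have "set_integrable lborel {0..b} \<rho>"
      by (rule set_integrable_subset[OF \<rho>_int]) auto
    moreover have "set_integrable lborel {0..b} (\<lambda>t. lam * gr t)"
    proof -
      have "emeasure lborel {0..b} < \<infinity>" by (cases "0 \<le> b") auto
      then show ?thesis using gr_int[of "{0..b}"] by (intro set_integrable_mult_right) auto
    qed
    ultimately show ?thesis unfolding H_def by (rule set_integral_diff(1))
  qed
  have H_eq: "H r = H 0 + d * (LINT t:{0<..r}|lborel. H t)" if r: "0 < r" for r
  proof -
    have i1: "set_integrable lborel {0<..r} \<rho>"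
      by (rule set_integrable_subset[OF \<rho>_int]) auto
    have i2: "set_integrable lborel {0<..r} (\<lambda>t. lam * gr t)"
      using gr_int[of "{0<..r}"] r by (intro set_integrable_mult_right) auto
    have LH: "(LINT t:{0<..r}|lborel. H t) = (LINT t:{0<..r}|lborel. \<rho> t) - lam * (LINT t:{0<..r}|lborel. gr t)"
      unfolding H_def using set_integral_diff(2)[OF i1 i2] by simp
    have e1: "\<rho> r - \<rho> 0 + lam * measure q {0<..r} = d * (LINT t:{0<..r}|lborel. \<rho> t)"
      using stat[of 0 r] r by simp
    have e2: "d * (LINT t:{0<..r}|lborel. gr t) + gr 0 = gr r + measure q {0<..r}"
      using gr_eq[of 0 r] r by simp
    have e3: "lam * (d * (LINT t:{0<..r}|lborel. gr t)) + lam * gr 0 = lam * gr r + lam * measure q {0<..r}"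
      using arg_cong[OF e2, of "\<lambda>x. lam * x"] by (simp add: distrib_left)
    show ?thesis unfolding LH unfolding H_def using e1 e3 by (simp add: algebra_simps)
  qed
  have H_exp: "H b = H 0 * exp (d*b)" if b: "0 \<le> b" for b
    by (rule ode_unique[OF H_int H_eq b])
  have \<rho>_form: "\<rho> b = lam * gr b + H 0 * exp (d*b)" if "0 \<le> b" for b
    using H_exp[OF that] unfolding H_def by simp
  have H0: "H 0 = 0"
  proof (rule ccontr)
    assume "H 0 \<noteq> 0"
    then consider "H 0 > 0" | "H 0 < 0" by linarith
    then show False
    proof cases
      case 1
      have lowb: "H 0 \<le> \<rho> b" if "0 \<le> b" for b
      proof -
        have "1 \<le> exp (d*b)" using d that by simp
        then have "H 0 \<le> H 0 * exp (d*b)" using 1 by simp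
        moreover have "0 \<le> lam * gr b" using lam gr_nn by simp
        ultimately show ?thesis using \<rho>_form[OF that] by linarith
      qed
      define I where "I = integral\<^sup>L lborel (\<lambda>x. indicator {0..} x * \<rho> x)"
      define T where "T = I / H 0 + 1"
      have T0: "0 \<le> T"
      proof -
        have "0 \<le> I" unfolding I_def using \<rho>_nonneg
          by (intro integral_nonneg_AE AE_I2) (auto simp: indicator_def)
        then show ?thesis unfolding T_def using 1 by simp
      qed
      have "integral\<^sup>L lborel (\<lambda>x. indicator {0..T} x * H 0) \<le> I"
        unfolding I_def
      proof (rule integral_mono)
        show "integrable lborel (\<lambda>x. indicator {0..T} x * H 0)"
          using T0 by (intro integrable_mult_left integrable_real_indicator) auto
        show "integrable lborel (\<lambda>x. indicator {0..} x * \<rho> x)"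
          using \<rho>_int by (simp add: set_integrable_def)
        fix x show "indicator {0..T} x * H 0 \<le> indicator {0..} x * \<rho> x"
          using lowb[of x] \<rho>_nonneg[of x] by (auto simp: indicator_def)
      qed
      moreover have "integral\<^sup>L lborel (\<lambda>x. indicator {0..T} x * H 0) = T * H 0"
        using T0 by simp
      ultimately have "T * H 0 \<le> I" using T0 by simp
      moreover have "T * H 0 = I + H 0" unfolding T_def using 1 by (simp add: field_simps)
      ultimately show False using 1 by simp
    next
      case 2
      have "(\<lambda>n. measure q {real n<..}) \<longlonglongrightarrow> measure q (\<Inter>n. {real n<..})"
        by (rule q.finite_Lim_measure_decseq) (auto simp: q_sets decseq_def)
      moreover have "(\<Inter>n. {real n<..}) = {}"
      proof -
        have "x \<notin> (\<Inter>n. {real n<..})" for x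
        proof -
          obtain n where "x \<le> real n" using real_arch_simple by blast
          then show ?thesis by (auto simp: not_less)
        qed
        then show ?thesis by blast
      qed
      ultimately have "(\<lambda>n. measure q {real n<..}) \<longlonglongrightarrow> 0" by simp
      then have "(\<lambda>n. lam * measure q {real n<..}) \<longlonglongrightarrow> lam * 0"
        by (intro tendsto_mult tendsto_const)
      then have "eventually (\<lambda>n. lam * measure q {real n<..} < - H 0) sequentially"
        using 2 by (intro order_tendstoD(2)) auto
      then obtain n where n: "lam * measure q {real n<..} < - H 0"
        by (auto dest: eventually_happens)
      define b where "b = real n"
      have b0: "0 \<le> b" by (simp add: b_def)
      have "1 \<le> exp (d*b)" using d b0 by simp
      then have "H 0 * exp (d*b) \<le> H 0" using 2 by (simp add: mult_le_cancel_left1)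
      moreover have "lam * gr b \<le> lam * measure q {b<..}" using lam gr_le by (simp add: mult_left_mono)
      ultimately have "\<rho> b < 0" using \<rho>_form[OF b0] n unfolding b_def by linarith
      with \<rho>_nonneg[OF b0] show False by simp
    qed
  qed
  show ?thesis
  proof (rule AE_I2, rule impI)
    fix r :: real assume "0 \<le> r"
    then show "\<rho> r = lam * (LINT \<alpha>:{r<..}|q. exp (- d * (\<alpha> - r)))"
      using \<rho>_form[of r] H0 by (simp add: gr_def)
  qed
qed

end
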